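(* If a graph $G$ contains a path on $k$ vertices as a subgraph for every $k\in\mathbb{N}$, then $G$ is $\omega$-evadible.
   Context: Cat Herding is played on a simple, possibly infinite graph $G$. The cat first places its token on a vertex. Then the players alternate, the herder moving first: the herder deletes one edge of the current graph, and then, unless the cat's current vertex has degree $0$ in the current graph, the cat moves its token along a finite path with at least one edge in the current graph to a different vertex. The cat is captured when its vertex has degree $0$ in the current graph. $G$ is $k$-evadible if the cat has a strategy (including its choice of starting vertex) that, against every herder strategy, yields a legal cat move after each of the first $k-1$ edge deletions; $G$ is $\omega$-evadible if it is $k$-evadible for every $k\in\mathbb{N}$. *)

theory Defs
  imports Main
begin

definition simple_graph :: "'a set \<Rightarrow> 'a set set \<Rightarrow> bool" where
  "simple_graph V E \<longleftrightarrow> (\<forall>e\<in>E. \<exists>x y. x \<noteq> y \<and> e = {x, y} \<and> x \<in> V \<and> y \<in> V)"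

definition adj :: "'a set set \<Rightarrow> ('a \<times> 'a) set" where
  "adj E = {(x, y). x \<noteq> y \<and> {x, y} \<in> E}"

text \<open>cat_survives n E v: the cat, sitting on v in current graph with edge set E,
  can make a legal move after each of the next n edge deletions, whatever the herder does.
  A legal move: along a finite path (of at least one edge) of the current graph to a
  different vertex; equivalently w differs from v and is reachable from v by a walk
  with at least one edge. If v has degree 0 no such move exists (capture).\<close>
fun cat_survives :: "nat \<Rightarrow> 'a set set \<Rightarrow> 'a \<Rightarrow> bool" where
  "cat_survives 0 E v = True"
| "cat_survives (Suc n) E v =
     (\<forall>e\<in>E. \<exists>w. w \<noteq> v \<and> (v, w) \<in> (adj (E - {e}))\<^sup>+ \<and> cat_survives n (E - {e}) w)"

definition evadible :: "nat \<Rightarrow> 'a set \<Rightarrow> 'a set set \<Rightarrow> bool" where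
  "evadible k V E \<longleftrightarrow> (\<exists>v\<in>V. cat_survives (k - 1) E v)"

definition omega_evadible :: "'a set \<Rightarrow> 'a set set \<Rightarrow> bool" where
  "omega_evadible V E \<longleftrightarrow> (\<forall>k. evadible k V E)"

definition contains_path :: "'a set \<Rightarrow> 'a set set \<Rightarrow> nat \<Rightarrow> bool" where
  "contains_path V E k \<longleftrightarrow> (\<exists>f. inj_on f {..<k} \<and> f ` {..<k} \<subseteq> V \<and>
      (\<forall>i. Suc i < k \<longrightarrow> {f i, f (Suc i)} \<in> E))"

end

theory Submission
  imports Defs
begin

fun gg :: "nat \<Rightarrow> nat" where
  "gg 0 = 0" | "gg (Suc n) = 2 * gg n + 1"

definition seg :: "'a set set \<Rightarrow> (nat \<Rightarrow> 'a) \<Rightarrow> nat \<Rightarrow> nat \<Rightarrow> bool" where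
  "seg E f a b \<longleftrightarrow> inj_on f {a..b} \<and> (\<forall>t. a \<le> t \<longrightarrow> t < b \<longrightarrow> {f t, f (Suc t)} \<in> E)"

lemma adj_sym: assumes "{x, y} \<in> E" "x \<noteq> y" shows "(x, y) \<in> adj E \<and> (y, x) \<in> adj E"
proof -
  have c: "{y, x} = {x, y}" by (rule insert_commute)
  show ?thesis unfolding adj_def using assms c by simp
qed

lemma seg_fwd:
  assumes "seg E f a b" "a \<le> s" "s + Suc d \<le> b"
  shows "(f s, f (s + Suc d)) \<in> (adj E)\<^sup>+ \<and> (f (s + Suc d), f s) \<in> (adj E)\<^sup>+"
  using assms(3)
proof (induction d)
  case 0
  have e: "{f s, f (Suc s)} \<in> E" using assms(1,2) 0 unfolding seg_def by simp
  have inj: "inj_on f {a..b}" using assms(1) unfolding seg_def by blast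
  have m: "s \<in> {a..b}" "Suc s \<in> {a..b}" using assms(2) 0 by simp_all
  have ne: "f s \<noteq> f (Suc s)"
  proof
    assume "f s = f (Suc s)" then have "s = Suc s" using inj_onD[OF inj _ m] by blast
    then show False by simp
  qed
  have "(f s, f (Suc s)) \<in> adj E" "(f (Suc s), f s) \<in> adj E"
    using adj_sym[OF e ne] by auto
  then show ?case by (simp add: r_into_trancl')
next
  case (Suc d)
  then have IH: "(f s, f (s + Suc d)) \<in> (adj E)\<^sup>+ \<and> (f (s + Suc d), f s) \<in> (adj E)\<^sup>+" by simp
  let ?t = "s + Suc d"
  have e: "{f ?t, f (Suc ?t)} \<in> E" using assms(1,2) Suc.prems unfolding seg_def by simp
  have inj: "inj_on f {a..b}" using assms(1) unfolding seg_def by blast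
  have m: "?t \<in> {a..b}" "Suc ?t \<in> {a..b}" using assms(2) Suc.prems by simp_all
  have ne: "f ?t \<noteq> f (Suc ?t)"
  proof
    assume "f ?t = f (Suc ?t)" then have "?t = Suc ?t" using inj_onD[OF inj _ m] by blast
    then show False by simp
  qed
  have a1: "(f ?t, f (Suc ?t)) \<in> adj E" and a2: "(f (Suc ?t), f ?t) \<in> adj E"
    using adj_sym[OF e ne] by auto
  have "(f s, f (Suc ?t)) \<in> (adj E)\<^sup>+" by (rule trancl_into_trancl[OF conjunct1[OF IH] a1])
  moreover have "(f (Suc ?t), f s) \<in> (adj E)\<^sup>+" by (rule trancl_into_trancl2[OF a2 conjunct2[OF IH]])
  ultimately show ?case by simp
qed

lemma seg_reach:
  assumes "seg E f a b" "a \<le> s" "s \<le> b" "a \<le> t" "t \<le> b" "s \<noteq> t"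
  shows "(f s, f t) \<in> (adj E)\<^sup>+"
proof (cases "s < t")
  case True
  then obtain d where d: "t = s + Suc d" by (metis add_Suc_right less_imp_Suc_add)
  have "s + Suc d \<le> b" using d assms(5) by simp
  from conjunct1[OF seg_fwd[OF assms(1) assms(2) this]] show ?thesis unfolding d .
next
  case False
  then have "t < s" using assms(6) by simp
  then obtain d where d: "s = t + Suc d" by (metis add_Suc_right less_imp_Suc_add)
  have "t + Suc d \<le> b" using d assms(3) by simp
  from conjunct2[OF seg_fwd[OF assms(1) assms(4) this]] show ?thesis unfolding d .
qed

lemma seg_sub:
  assumes "seg E f a b" "a \<le> a'" "b' \<le> b"
    "\<forall>t. a' \<le> t \<longrightarrow> t < b' \<longrightarrow> {f t, f (Suc t)} \<in> E'"
  shows "seg E' f a' b'"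
proof -
  have "inj_on f {a'..b'}" using assms(1-3) unfolding seg_def
    by (meson atLeastatMost_subset_iff inj_on_subset order_refl)
  then show ?thesis using assms(4) unfolding seg_def by blast
qed

lemma step:
  assumes "seg E' f a b" "2 * gg n + 1 \<le> b - a" "a \<le> p" "p \<le> b"
    and IH: "\<And>E i p j. seg E f i j \<Longrightarrow> i \<le> p \<Longrightarrow> p \<le> j \<Longrightarrow> gg n \<le> p - i \<Longrightarrow> gg n \<le> j - p
        \<Longrightarrow> cat_survives n E (f p)"
  shows "\<exists>w. w \<noteq> f p \<and> (f p, w) \<in> (adj E')\<^sup>+ \<and> cat_survives n E' w"
proof -
  define p' where "p' = (if p = a + gg n then a + gg n + 1 else a + gg n)"
  then have p': "p' \<noteq> p" "p' = a + gg n \<or> p' = a + gg n + 1" by auto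
  have r: "a \<le> p'" "p' \<le> b" "gg n \<le> p' - a" "gg n \<le> b - p'" using p' assms(2) by auto
  have inj: "inj_on f {a..b}" using assms(1) unfolding seg_def by blast
  have ne: "f p' \<noteq> f p"
  proof
    assume "f p' = f p"
    moreover have "p' \<in> {a..b}" "p \<in> {a..b}" using r assms(3,4) by simp_all
    ultimately have "p' = p" using inj by (meson inj_onD)
    then show False using p'(1) by simp
  qed
  have np: "p \<noteq> p'" using p'(1) by simp
  have R: "(f p, f p') \<in> (adj E')\<^sup>+" by (rule seg_reach[OF assms(1) assms(3,4) r(1,2) np])
  have C: "cat_survives n E' (f p')" by (rule IH[OF assms(1) r])
  show ?thesis using ne R C by blast
qed

lemma main:
  "seg E f i j \<Longrightarrow> i \<le> p \<Longrightarrow> p \<le> j \<Longrightarrow> gg n \<le> p - i \<Longrightarrow> gg n \<le> j - p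
    \<Longrightarrow> cat_survives n E (f p)"
proof (induction n arbitrary: E i p j)
  case 0
  then show ?case by simp
next
  case (Suc n)
  show ?case unfolding cat_survives.simps
  proof
    fix e assume eE: "e \<in> E"
    let ?E' = "E - {e}"
    show "\<exists>w. w \<noteq> f p \<and> (f p, w) \<in> (adj ?E')\<^sup>+ \<and> cat_survives n ?E' w"
    proof (cases "\<exists>q. i \<le> q \<and> q < j \<and> e = {f q, f (Suc q)}")
      case False
      have "seg ?E' f i j" using seg_sub[OF Suc.prems(1), of i j ?E'] False Suc.prems(1)
        unfolding seg_def by blast
      then show ?thesis using step[of ?E' f i j n p, OF _ _ Suc.prems(2,3) Suc.IH] Suc.prems by auto
    next
      case True
      then obtain q where q: "i \<le> q" "q < j" "e = {f q, f (Suc q)}" by auto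
      have injf: "inj_on f {i..j}" using Suc.prems(1) unfolding seg_def by auto
      have dist: "\<And>t. i \<le> t \<Longrightarrow> t < j \<Longrightarrow> t \<noteq> q \<Longrightarrow> {f t, f (Suc t)} \<noteq> {f q, f (Suc q)}"
      proof
        fix t assume t: "i \<le> t" "t < j" "t \<noteq> q" and eq: "{f t, f (Suc t)} = {f q, f (Suc q)}"
        have m: "Suc t \<in> {i..j}" "Suc q \<in> {i..j}" "q \<in> {i..j}" "t \<in> {i..j}" using t q by auto
        have "f t = f q \<or> f t = f (Suc q)" using eq by blast
        then have A: "t = q \<or> t = Suc q" using injf m by (meson inj_onD)
        have "f (Suc t) = f q \<or> f (Suc t) = f (Suc q)" using eq by blast
        then have B: "Suc t = q \<or> Suc t = Suc q" using injf m by (meson inj_onD)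
        from A B show False using t by auto
      qed
      show ?thesis
      proof (cases "p \<le> q")
        case True
        have s: "seg ?E' f i q" using seg_sub[OF Suc.prems(1), of i q ?E'] q dist Suc.prems(1)
          unfolding seg_def by auto
        show ?thesis using step[of ?E' f i q n p, OF s _ Suc.prems(2) True Suc.IH] Suc.prems True by auto
      next
        case False
        have s: "seg ?E' f (Suc q) j" using seg_sub[OF Suc.prems(1), of "Suc q" j ?E'] q dist Suc.prems(1)
          unfolding seg_def by auto
        show ?thesis using step[of ?E' f "Suc q" j n p, OF s _ _ Suc.prems(3) Suc.IH] Suc.prems False by auto
      qed
    qed
  qed
qed

theorem mainTheorem16:
  fixes V :: "'a set" and E :: "'a set set"
  assumes "simple_graph V E"
    and "\<forall>k. contains_path V E k"
  shows "omega_evadible V E"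
  unfolding omega_evadible_def evadible_def
proof
  fix k
  let ?n = "k - 1 :: nat"
  let ?m = "2 * gg ?n + 1"
  obtain f where f: "inj_on f {..<?m}" "f ` {..<?m} \<subseteq> V"
    "\<forall>i. Suc i < ?m \<longrightarrow> {f i, f (Suc i)} \<in> E"
    using assms(2) unfolding contains_path_def by blast
  have "{0..2 * gg ?n} = {..<?m}" by auto
  then have s: "seg E f 0 (2 * gg ?n)" using f unfolding seg_def by auto
  have "cat_survives ?n E (f (gg ?n))" by (rule main[OF s]) auto
  moreover have "f (gg ?n) \<in> V" using f(2) by auto
  ultimately show "\<exists>v\<in>V. cat_survives ?n E v" by blast
qed

end
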